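(* Let $\alpha\ne0$ be a nonzero square in $\mathbb{F}_p$ and let $\omega$ be the integer with $1\le\omega\le\frac{p-1}{2}$ and $\omega^2\equiv\alpha\pmod p$. Then in the block $A_\alpha$ of $\mathcal{U}_0(\mathfrak{sl}_2)$ we have $e^{p-\omega}(c-\alpha)=0$ (i.e. $\pi_\alpha e^{p-\omega}(c-\alpha)=0$).
   Context: Let $k$ be an algebraically closed field of characteristic $p>2$, $\mathfrak{sl}_2=\mathfrak{sl}_2(k)$ with standard basis $e,f,h$, and $\mathcal{U}_0(\mathfrak{sl}_2)=\mathcal{U}(\mathfrak{sl}_2)/\langle e^p,f^p,h^p-h\rangle$. $c=(h-1)^2+4ef$ is central. $\mathcal{U}_0(\mathfrak{sl}_2)=\bigoplus_\alpha A_\alpha$ is the block decomposition, $A_\alpha=\pi_\alpha\mathcal{U}_0(\mathfrak{sl}_2)$ with central idempotents $\pi_\alpha$, where $\alpha\in\mathbb{F}_p$ is the scalar by which $c$ acts on the simple modules of the block. *)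

theory Defs
  imports "HOL-Computational_Algebra.Polynomial"
begin

definition k_algebra_map :: "('k::field \<Rightarrow> 'a::ring_1) \<Rightarrow> bool" where
  "k_algebra_map \<phi> \<longleftrightarrow> \<phi> 1 = 1 \<and> (\<forall>x y. \<phi> (x + y) = \<phi> x + \<phi> y)
      \<and> (\<forall>x y. \<phi> (x * y) = \<phi> x * \<phi> y) \<and> (\<forall>x a. \<phi> x * a = a * \<phi> x)"

inductive_set subalg_gen :: "('k \<Rightarrow> 'a::ring_1) \<Rightarrow> 'a set \<Rightarrow> 'a set" for \<phi> S where
  scal: "\<phi> x \<in> subalg_gen \<phi> S"
| gen: "s \<in> S \<Longrightarrow> s \<in> subalg_gen \<phi> S"
| add: "a \<in> subalg_gen \<phi> S \<Longrightarrow> b \<in> subalg_gen \<phi> S \<Longrightarrow> a + b \<in> subalg_gen \<phi> S"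
| mult: "a \<in> subalg_gen \<phi> S \<Longrightarrow> b \<in> subalg_gen \<phi> S \<Longrightarrow> a * b \<in> subalg_gen \<phi> S"

text \<open>The universal such algebra is
  U_0(sl_2) itself; every other one is a quotient of it.\<close>
definition U0_sl2_alg :: "nat \<Rightarrow> ('k::field \<Rightarrow> 'a::ring_1) \<Rightarrow> 'a \<Rightarrow> 'a \<Rightarrow> 'a \<Rightarrow> bool" where
  "U0_sl2_alg p \<phi> e f h \<longleftrightarrow> k_algebra_map \<phi>
     \<and> subalg_gen \<phi> {e, f, h} = UNIV
     \<and> e * f - f * e = h \<and> h * e - e * h = 2 * e \<and> h * f - f * h = - (2 * f)
     \<and> e ^ p = 0 \<and> f ^ p = 0 \<and> h ^ p = h"

definition casimir :: "'a::ring_1 \<Rightarrow> 'a \<Rightarrow> 'a \<Rightarrow> 'a" where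
  "casimir e f h = (h - 1)^2 + 4 * e * f"

text \<open>The block idempotent \<pi>_\<alpha>: the central idempotent cutting out the sum of the blocks
  on whose simple modules c acts by the scalar \<alpha>, i.e. the central idempotent z such that
  c - \<alpha> is nilpotent on zA and invertible on (1-z)A.\<close>
definition block_idem :: "'a::ring_1 \<Rightarrow> 'a \<Rightarrow> 'a \<Rightarrow> int \<Rightarrow> 'a" where
  "block_idem e f h \<alpha> = (THE z. z * z = z \<and> (\<forall>x. z * x = x * z)
      \<and> (\<exists>N::nat. (casimir e f h - of_int \<alpha>) ^ N * z = 0)
      \<and> (\<exists>y. (casimir e f h - of_int \<alpha>) * y = 1 - z))"

end

theory Submission
  imports Defs "HOL-Computational_Algebra.Computational_Algebra" "HOL-Number_Theory.Cong"
begin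


definition evx :: "('r::comm_ring_1 \<Rightarrow> 'a::ring_1) \<Rightarrow> 'a \<Rightarrow> 'r poly \<Rightarrow> 'a" where
  "evx \<psi> x P = (\<Sum>i\<le>degree P. \<psi> (coeff P i) * x ^ i)"

locale evhom =
  fixes \<psi> :: "'r::comm_ring_1 \<Rightarrow> 'a::ring_1" and x :: 'a
  assumes psi_add: "\<psi> (a + b) = \<psi> a + \<psi> b"
    and psi_mult: "\<psi> (a * b) = \<psi> a * \<psi> b"
    and psi_1: "\<psi> 1 = 1"
    and psi_comm: "\<psi> a * x = x * \<psi> a"
begin

lemma psi_0: "\<psi> 0 = 0"
  using psi_add[of 0 0] by simp

lemma psi_uminus: "\<psi> (- a) = - \<psi> a"
  using psi_add[of "-a" a] psi_0 by (simp add: eq_neg_iff_add_eq_0)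

lemma psi_diff: "\<psi> (a - b) = \<psi> a - \<psi> b"
  using psi_add[of a "-b"] psi_uminus by simp

lemma psi_of_nat: "\<psi> (of_nat n) = of_nat n"
  by (induction n) (simp_all add: psi_0 psi_add psi_1)

lemma psi_of_int: "\<psi> (of_int n) = of_int n"
  by (cases n) (simp_all add: psi_of_nat psi_uminus psi_diff psi_1)

lemma psi_numeral: "\<psi> (numeral n) = numeral n"
  using psi_of_nat[of "numeral n"] by simp

lemma evx_bound:
  assumes "degree P \<le> n"
  shows "evx \<psi> x P = (\<Sum>i\<le>n. \<psi> (coeff P i) * x ^ i)"
proof -
  have "(\<Sum>i\<le>n. \<psi> (coeff P i) * x ^ i) = (\<Sum>i\<le>degree P. \<psi> (coeff P i) * x ^ i)"
    by (rule sum.mono_neutral_right) (use assms in \<open>auto simp: coeff_eq_0 psi_0\<close>)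
  thus ?thesis by (simp add: evx_def)
qed

lemma evx_0 [simp]: "evx \<psi> x 0 = 0"
  by (simp add: evx_def psi_0)

lemma evx_const [simp]: "evx \<psi> x [:a:] = \<psi> a"
  by (simp add: evx_def)

lemma evx_add [simp]: "evx \<psi> x (P + Q) = evx \<psi> x P + evx \<psi> x Q"
proof -
  let ?n = "max (degree P) (degree Q)"
  have "evx \<psi> x (P + Q) = (\<Sum>i\<le>?n. \<psi> (coeff (P+Q) i) * x ^ i)"
    by (rule evx_bound) (simp add: degree_add_le)
  also have "\<dots> = (\<Sum>i\<le>?n. \<psi> (coeff P i) * x ^ i) + (\<Sum>i\<le>?n. \<psi> (coeff Q i) * x ^ i)"
    by (simp add: psi_add distrib_right sum.distrib)
  also have "\<dots> = evx \<psi> x P + evx \<psi> x Q"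
    using evx_bound[of P ?n] evx_bound[of Q ?n] by simp
  finally show ?thesis .
qed

lemma evx_uminus [simp]: "evx \<psi> x (- P) = - evx \<psi> x P"
  by (simp add: evx_def psi_uminus sum_negf)

lemma evx_diff [simp]: "evx \<psi> x (P - Q) = evx \<psi> x P - evx \<psi> x Q"
  using evx_add[of P "-Q"] by simp

lemma evx_pCons: "evx \<psi> x (pCons a P) = \<psi> a + evx \<psi> x P * x"
proof -
  have "evx \<psi> x (pCons a P) = (\<Sum>i\<le>Suc (degree P). \<psi> (coeff (pCons a P) i) * x ^ i)"
    by (rule evx_bound) (simp add: degree_pCons_le)
  also have "\<dots> = \<psi> a + (\<Sum>i\<le>degree P. \<psi> (coeff P i) * x ^ Suc i)"
    by (subst sum.atMost_Suc_shift) simp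
  also have "\<dots> = \<psi> a + evx \<psi> x P * x"
    by (simp add: evx_def sum_distrib_right mult.assoc power_commutes)
  finally show ?thesis .
qed

lemma evx_smult [simp]: "evx \<psi> x (smult a P) = \<psi> a * evx \<psi> x P"
proof -
  have "evx \<psi> x (smult a P) = (\<Sum>i\<le>degree P. \<psi> (coeff (smult a P) i) * x ^ i)"
    by (rule evx_bound) (simp add: degree_smult_le)
  thus ?thesis by (simp add: evx_def psi_mult sum_distrib_left mult.assoc)
qed

lemma x_comm_term: "x * (\<psi> c * x ^ n) = \<psi> c * x ^ n * x"
proof -
  have "x * (\<psi> c * x ^ n) = \<psi> c * (x * x ^ n)" by (simp add: psi_comm flip: mult.assoc)
  also have "\<dots> = \<psi> c * x ^ n * x" by (simp add: power_commutes mult.assoc)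
  finally show ?thesis .
qed

lemma x_comm_evx: "x * evx \<psi> x P = evx \<psi> x P * x"
  by (simp add: evx_def sum_distrib_left sum_distrib_right x_comm_term)

lemma evx_mult [simp]: "evx \<psi> x (P * Q) = evx \<psi> x P * evx \<psi> x Q"
proof (induction P)
  case 0
  then show ?case by simp
next
  case (pCons a P)
  have "evx \<psi> x (pCons a P * Q) = \<psi> a * evx \<psi> x Q + evx \<psi> x (pCons 0 (P * Q))"
    by simp
  also have "\<dots> = \<psi> a * evx \<psi> x Q + evx \<psi> x P * evx \<psi> x Q * x"
    by (simp add: evx_pCons psi_0 pCons.IH)
  also have "\<dots> = (\<psi> a + evx \<psi> x P * x) * evx \<psi> x Q"
    by (simp add: distrib_right mult.assoc x_comm_evx)
  finally show ?case by (simp add: evx_pCons)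
qed

lemma evx_1 [simp]: "evx \<psi> x 1 = 1"
  using evx_const[of 1] by (simp add: psi_1 one_pCons)

lemma evx_sum: "evx \<psi> x (\<Sum>i\<in>A. P i) = (\<Sum>i\<in>A. evx \<psi> x (P i))"
  by (induction A rule: infinite_finite_induct) simp_all

lemma evx_X [simp]: "evx \<psi> x [:a, 1:] = \<psi> a + x"
  by (simp add: evx_pCons psi_1)

lemma evx_lin: "evx \<psi> x [:a, b:] = \<psi> a + \<psi> b * x"
  by (simp add: evx_pCons)

lemma evx_power [simp]: "evx \<psi> x (P ^ n) = evx \<psi> x P ^ n"
  by (induction n) (simp_all add: power_Suc)

lemma evx_commute:
  assumes "y * x = x * y" "\<And>a. \<psi> a * y = y * \<psi> a"
  shows "evx \<psi> x P * y = y * evx \<psi> x P"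
proof -
  have "\<psi> (coeff P i) * x ^ i * y = y * (\<psi> (coeff P i) * x ^ i)" for i
  proof -
    have "x ^ i * y = y * x ^ i" using assms(1) power_commuting_commutes[of x y i] by simp
    hence "\<psi> (coeff P i) * x ^ i * y = (\<psi> (coeff P i) * y) * x ^ i" by (simp add: mult.assoc)
    thus ?thesis using assms(2) by (simp add: mult.assoc)
  qed
  thus ?thesis by (simp add: evx_def sum_distrib_left sum_distrib_right)
qed

lemma evx_evx_commute: "evx \<psi> x P * evx \<psi> x Q = evx \<psi> x Q * evx \<psi> x P"
  by (simp flip: evx_mult add: mult.commute)

lemma psi_comm_evx: "\<psi> d * evx \<psi> x P = evx \<psi> x P * \<psi> d"
  using evx_evx_commute[of "[:d:]" P] by simp

lemma evx_shift:
  assumes "x * y = y * (x + \<psi> d)" "\<And>a. \<psi> a * y = y * \<psi> a"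
  shows "evx \<psi> x P * y = y * evx \<psi> x (pcompose P [:d, 1:])"
proof (induction P)
  case 0
  then show ?case by simp
next
  case (pCons a P)
  have c: "(x + \<psi> d) * evx \<psi> x Q = evx \<psi> x Q * (x + \<psi> d)" for Q
    using evx_evx_commute[of "[:d,1:]" Q] by (simp add: add.commute)
  have "evx \<psi> x (pCons a P) * y = \<psi> a * y + evx \<psi> x P * (x * y)"
    by (simp add: evx_pCons distrib_right mult.assoc x_comm_evx)
  also have "\<dots> = y * \<psi> a + y * evx \<psi> x (pcompose P [:d, 1:]) * (x + \<psi> d)"
    by (simp add: assms pCons.IH flip: mult.assoc)
  also have "\<dots> = y * evx \<psi> x (pcompose (pCons a P) [:d, 1:])"
    by (simp add: pcompose_pCons distrib_left distrib_right mult.assoc c evx_pCons psi_0 add.commute psi_comm_evx)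
  finally show ?case .
qed

end


definition Zp :: "nat \<Rightarrow> 'k::field poly" where
  "Zp p = (\<Prod>\<mu><p. [:- of_nat \<mu>, 1:])"

definition Dl :: "nat \<Rightarrow> nat \<Rightarrow> 'k::field poly" where
  "Dl p l = (\<Prod>\<mu>\<in>{..<p} - {l}. [:- of_nat \<mu>, 1:])"

fun Rk :: "'k::field \<Rightarrow> nat \<Rightarrow> 'k poly" where
  "Rk l 0 = 1"
| "Rk l (Suc k) = [:- ((l - 1) ^ 2), 1:] * Rk (l - 2) k"

lemma Rk_prod: "Rk l k = (\<Prod>j<k. [:- ((l - 1 - 2 * of_nat j) ^ 2), 1:])"
proof (induction k arbitrary: l)
  case 0
  then show ?case by simp
next
  case (Suc k)
  have "(\<Prod>j<k. [:- ((l - 2 - 1 - 2 * of_nat j) ^ 2), 1:]) =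
        (\<Prod>j<k. [:- ((l - 1 - 2 * of_nat (Suc j)) ^ 2), 1:])"
    by (rule prod.cong) (simp_all add: algebra_simps)
  thus ?case by (simp only: Rk.simps Suc prod.lessThan_Suc_shift) simp
qed

definition Fsq :: "nat \<Rightarrow> 'k::field poly" where
  "Fsq s = [:- ((of_nat s) ^ 2), 1:]"

definition gmap :: "nat \<Rightarrow> nat \<Rightarrow> nat \<Rightarrow> nat" where
  "gmap p l j = nat ((int l - 1 - 2 * int j) mod int p)"

lemma bez_alg: "A = 1 + L * T \<Longrightarrow> (T * T) * L ^ 2 + (1 - L * T) * A = (1::'b::comm_ring_1)"
  by (simp add: algebra_simps power2_eq_square)

lemma bezout_lin2:
  fixes Q :: "'k::field poly"
  assumes "poly Q a \<noteq> 0"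
  shows "\<exists>u v. u * [:-a, 1:] ^ 2 + v * Q = 1"
proof -
  define r where "r = poly Q a"
  have "poly (Q - [:r:]) a = 0" by (simp add: r_def)
  then obtain T where T: "Q - [:r:] = [:-a, 1:] * T" using poly_eq_0_iff_dvd by (metis dvdE)
  define T' where "T' = smult (inverse r) T"
  define m where "m = [:-a, 1:] * T'"
  have "[:inverse r:] * Q = 1 + m"
  proof -
    have "[:inverse r:] * Q = [:inverse r:] * (Q - [:r:]) + [:inverse r * r:]"
      by (simp add: algebra_simps)
    also have "\<dots> = [:inverse r:] * ([:-a, 1:] * T) + [:inverse r * r:]"
      by (simp only: T)
    also have "\<dots> = m + 1" using assms
      by (simp add: m_def T'_def r_def one_pCons)
    finally show ?thesis by simp
  qed
  hence "(T' * T') * [:-a, 1:] ^ 2 + (1 - [:-a, 1:] * T') * ([:inverse r:] * Q) = 1"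
    unfolding m_def by (rule bez_alg)
  hence "(T' * T') * [:-a, 1:] ^ 2 + ((1 - [:-a, 1:] * T') * [:inverse r:]) * Q = 1"
    by (simp only: mult.assoc)
  thus ?thesis by blast
qed

definition Q0 :: "nat \<Rightarrow> nat \<Rightarrow> 'k::field poly" where
  "Q0 p w = (\<Prod>s\<in>{..<p} - {w} - {p - w}. Fsq s)"

context
  fixes p :: nat
  assumes charp: "CHAR('k::field) = p" and p2: "p > 2"
begin

lemma prime_p: "prime p"
  using prime_CHAR_semidom[where 'a='k] charp p2 by simp

lemma ofnat_inj: "a < p \<Longrightarrow> b < p \<Longrightarrow> (of_nat a :: 'k) = of_nat b \<longleftrightarrow> a = b"
  using of_nat_eq_iff_cong_CHAR[where 'a='k, of a b] charp by (auto simp: cong_def)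

lemma ofint_zero: "(of_int x :: 'k) = 0 \<longleftrightarrow> int p dvd x"
  using of_int_eq_0_iff_char_dvd[where 'a='k] charp by simp

lemma two_nz: "(2 :: 'k) \<noteq> 0"
proof
  assume "(2::'k) = 0"
  hence "(of_int 2 :: 'k) = 0" by simp
  hence "int p dvd 2" using ofint_zero by blast
  hence "p dvd 2" by presburger
  thus False using p2 by (simp add: nat_dvd_not_less)
qed

lemma ofnat_p [simp]: "(of_nat p :: 'k) = 0"
  using charp by (metis of_nat_CHAR)

lemma frob1: "((x::'k) + 1) ^ p = x ^ p + 1"
proof -
  have "(x + 1) ^ p = (\<Sum>k\<le>p. of_nat (p choose k) * x ^ k * 1 ^ (p - k))"
    by (rule binomial_ring)
  also have "\<dots> = (\<Sum>k\<in>{0, p}. of_nat (p choose k) * x ^ k * 1 ^ (p - k))"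
  proof (rule sum.mono_neutral_right)
    show "\<forall>i\<in>{..p} - {0, p}. of_nat (p choose i) * x ^ i * 1 ^ (p - i) = 0"
    proof
      fix i assume "i \<in> {..p} - {0, p}"
      hence "p dvd (p choose i)" using dvd_choose_prime[of i p] prime_p by auto
      hence "(of_nat (p choose i) :: 'k) = 0" using of_nat_eq_0_iff_char_dvd charp by metis
      thus "of_nat (p choose i) * x ^ i * 1 ^ (p - i) = 0" by simp
    qed
  qed auto
  also have "\<dots> = x ^ p + 1" using p2 by simp
  finally show ?thesis .
qed

lemma frob: "(of_nat m :: 'k) ^ p = of_nat m"
proof (induction m)
  case 0
  then show ?case using p2 by simp
next
  case (Suc m)
  then show ?case using frob1[of "of_nat m"] by (simp add: add.commute)
qed

lemma card_img: "card ((of_nat :: nat \<Rightarrow> 'k) ` {..<p}) = p"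
proof -
  have "inj_on (of_nat :: nat \<Rightarrow> 'k) {..<p}" by (auto simp: inj_on_def ofnat_inj)
  thus ?thesis by (simp add: card_image)
qed

lemma Zp_eq: "(Zp p :: 'k poly) = monom 1 p - [:0, 1:]"
proof (rule poly_eqI_degree_lead_coeff[where n = p and A = "(of_nat :: nat \<Rightarrow> 'k) ` {..<p}"])
  have dZ: "degree (Zp p :: 'k poly) = p"
    by (simp add: Zp_def degree_prod_sum_eq)
  have lZ: "lead_coeff (Zp p :: 'k poly) = 1"
    by (simp add: Zp_def lead_coeff_prod)
  show "coeff (Zp p :: 'k poly) p = coeff (monom 1 p - [:0, 1:]) p"
  proof -
    have "coeff [:0, 1::'k:] p = 0" using p2 by (auto simp: coeff_pCons split: nat.split)
    thus ?thesis using dZ lZ p2 by simp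
  qed
  show "p \<le> card ((of_nat :: nat \<Rightarrow> 'k) ` {..<p})" by (simp add: card_img)
  show "degree (Zp p :: 'k poly) \<le> p" by (simp add: dZ)
  show "degree (monom 1 p - [:0, 1:] :: 'k poly) \<le> p"
    by (rule order.trans[OF degree_diff_le_max]) (use p2 in \<open>auto simp: degree_monom_eq\<close>)
  fix z assume "z \<in> (of_nat :: nat \<Rightarrow> 'k) ` {..<p}"
  then obtain m where m: "m < p" "z = of_nat m" by auto
  have "poly (Zp p) z = 0" using m by (auto simp: Zp_def poly_prod)
  moreover have "poly (monom 1 p - [:0, 1:]) z = 0" using m frob by (simp add: poly_monom)
  ultimately show "poly (Zp p) z = poly (monom 1 p - [:0, 1:]) z" by simp
qed

lemma Dl_Zp: "l < p \<Longrightarrow> [:- of_nat l, 1:] * (Dl p l :: 'k poly) = Zp p"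
  unfolding Dl_def Zp_def by (subst prod.remove[of "{..<p}" l]) auto

lemma Dl_nz: "l < p \<Longrightarrow> poly (Dl p l :: 'k poly) (of_nat l) \<noteq> 0"
  by (auto simp: Dl_def poly_prod ofnat_inj)

lemma lagrange:
  "(\<Sum>l<p. smult (inverse (poly (Dl p l) (of_nat l))) (Dl p l :: 'k poly)) = 1"
proof (rule poly_eqI_degree[where A = "(of_nat :: nat \<Rightarrow> 'k) ` {..<p}"])
  fix z assume "z \<in> (of_nat :: nat \<Rightarrow> 'k) ` {..<p}"
  then obtain m where m: "m < p" "z = of_nat m" by auto
  have "poly (\<Sum>l<p. smult (inverse (poly (Dl p l) (of_nat l))) (Dl p l :: 'k poly)) z
      = (\<Sum>l<p. inverse (poly (Dl p l) (of_nat l)) * poly (Dl p l) (of_nat m))"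
    using m by (simp add: poly_sum)
  also have "\<dots> = inverse (poly (Dl p m) (of_nat m)) * poly (Dl p m) (of_nat m)
      + (\<Sum>l\<in>{..<p} - {m}. inverse (poly (Dl p l) (of_nat l)) * poly (Dl p l) (of_nat m))"
    using m by (subst sum.remove[of _ m]) auto
  also have "(\<Sum>l\<in>{..<p} - {m}. inverse (poly (Dl p l) (of_nat l)) * poly (Dl p l) ((of_nat m)::'k)) = 0"
    by (rule sum.neutral) (use m in \<open>auto simp: Dl_def poly_prod\<close>)
  also have "inverse (poly (Dl p m) (of_nat m)) * poly (Dl p m) ((of_nat m)::'k) = 1"
    using Dl_nz[OF m(1)] by simp
  finally show "poly (\<Sum>l<p. smult (inverse (poly (Dl p l) (of_nat l))) (Dl p l :: 'k poly)) z = poly 1 z"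
    by simp
next
  have "degree (\<Sum>l<p. smult (inverse (poly (Dl p l) (of_nat l))) (Dl p l :: 'k poly)) \<le> p - 1"
  proof (rule degree_sum_le)
    fix l assume "l \<in> {..<p}"
    hence "degree (Dl p l :: 'k poly) = p - 1"
      by (simp add: Dl_def degree_prod_sum_eq card_Diff_singleton)
    thus "degree (smult (inverse (poly (Dl p l) (of_nat l))) (Dl p l :: 'k poly)) \<le> p - 1"
      by (metis degree_smult_le)
  qed simp
  thus "degree (\<Sum>l<p. smult (inverse (poly (Dl p l) (of_nat l))) (Dl p l :: 'k poly)) < card ((of_nat :: nat \<Rightarrow> 'k) ` {..<p})"
    using p2 by (simp add: card_img)
next
  show "degree (1::'k poly) < card ((of_nat :: nat \<Rightarrow> 'k) ` {..<p})" using p2 by (simp add: card_img)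
qed
lemma gmap_of: "(of_nat (gmap p l j) :: 'k) = of_nat l - 1 - 2 * of_nat j"
proof -
  have "(of_nat (gmap p l j) :: 'k) = of_int ((int l - 1 - 2 * int j) mod int p)"
    using p2 by (simp add: gmap_def)
  also have "\<dots> = of_int (int l - 1 - 2 * int j)"
    using of_int_eq_iff_cong_CHAR[where 'a='k, of "(int l - 1 - 2 * int j) mod int p" "int l - 1 - 2 * int j"] charp
    by (simp add: cong_def)
  finally show ?thesis by simp
qed

lemma gmap_lt: "gmap p l j < p"
  using p2 by (simp add: gmap_def nat_less_iff)

lemma small_dvd: "int p dvd x \<Longrightarrow> \<bar>x\<bar> < int p \<Longrightarrow> x = 0"
  using dvd_imp_le_int by force

lemma gmap_inj: "inj_on (gmap p l) {..<p}"
proof (rule inj_onI)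
  fix a b assume ab: "a \<in> {..<p}" "b \<in> {..<p}" "gmap p l a = gmap p l b"
  hence "(of_nat l - 1 - 2 * of_nat a :: 'k) = of_nat l - 1 - 2 * of_nat b"
    by (metis gmap_of)
  hence "(2::'k) * (of_nat b - of_nat a) = 0" by (simp add: algebra_simps)
  hence "(of_int (int b - int a) :: 'k) = 0" using two_nz by simp
  hence "int p dvd int b - int a" using ofint_zero by blast
  hence "int b - int a = 0" using ab by (intro small_dvd) auto
  thus "a = b" by simp
qed

lemma Rk_img: "k \<le> p \<Longrightarrow> Rk (of_nat l :: 'k) k = (\<Prod>s\<in>gmap p l ` {..<k}. Fsq s)"
proof -
  assume k: "k \<le> p"
  have inj: "inj_on (gmap p l) {..<k}" by (rule inj_on_subset[OF gmap_inj]) (use k in auto)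
  have "Rk (of_nat l :: 'k) k = (\<Prod>j<k. Fsq (gmap p l j))"
    by (simp add: Rk_prod Fsq_def gmap_of)
  also have "\<dots> = (\<Prod>s\<in>gmap p l ` {..<k}. Fsq s)"
    by (simp add: prod.reindex[OF inj])
  finally show ?thesis .
qed

lemma Rk_full: "Rk (of_nat l :: 'k) p = (\<Prod>s<p. Fsq s)"
proof -
  have "gmap p l ` {..<p} = {..<p}"
  proof (rule card_subset_eq)
    show "gmap p l ` {..<p} \<subseteq> {..<p}" using gmap_lt by auto
    show "card (gmap p l ` {..<p}) = card {..<p}" using card_image[OF gmap_inj] by simp
  qed simp
  thus ?thesis using Rk_img[of p l] by simp
qed

lemma gmap_conflict:
  assumes w: "2 * w < p" and a: "a < w" and b: "b < w"
    and ga: "gmap p l a = w" and gb: "gmap p l b = p - w"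
  shows False
proof -
  have "(of_nat l - 1 - 2 * of_nat a :: 'k) = of_nat w" using ga gmap_of by metis
  moreover have "(of_nat l - 1 - 2 * of_nat b :: 'k) = - of_nat w"
    using gb gmap_of[of l b] w by (simp add: of_nat_diff)
  ultimately have "(of_nat l - 1 - 2 * of_nat a) - (of_nat l - 1 - 2 * of_nat b) = (of_nat w + of_nat w :: 'k)"
    by simp
  hence "(2::'k) * (of_nat b - of_nat a - of_nat w) = 0"
    by (simp add: algebra_simps)
  hence "(of_nat b - of_nat a - of_nat w :: 'k) = 0" using two_nz mult_eq_0_iff by blast
  hence "(of_int (int b - int a - int w) :: 'k) = 0" by simp
  hence "int p dvd int b - int a - int w" using ofint_zero by blast
  hence "int b - int a - int w = 0" using a b w by (intro small_dvd) auto
  thus False using a b by simp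
qed

lemma sq_cases:
  assumes "s < p" "w < p" "(of_nat s :: 'k) ^ 2 = of_nat w ^ 2" "0 < w"
  shows "s = w \<or> s = p - w"
proof -
  have "((of_nat s :: 'k) - of_nat w) * (of_nat s + of_nat w) = 0"
    using assms(3) by (simp add: algebra_simps power2_eq_square)
  hence "(of_int (int s - int w) :: 'k) = 0 \<or> (of_int (int s + int w) :: 'k) = 0" by simp
  thus ?thesis
  proof
    assume "(of_int (int s - int w) :: 'k) = 0"
    hence "int p dvd int s - int w" using ofint_zero by blast
    hence "int s - int w = 0" using assms by (intro small_dvd) auto
    thus ?thesis by simp
  next
    assume "(of_int (int s + int w) :: 'k) = 0"
    hence "int p dvd int s + int w" using ofint_zero by blast
    then obtain t where t: "int s + int w = int p * t" by (auto elim: dvdE)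
    have pp: "int p > 0" using p2 by simp
    have "int p * t > 0" using t assms(4) by simp
    hence "t > 0" using pp zero_less_mult_pos by blast
    moreover have "t < 2"
    proof (rule ccontr)
      assume "\<not> t < 2"
      hence "int p * 2 \<le> int p * t" using pp by (intro mult_left_mono) auto
      moreover have "int s + int w < int p * 2" using assms(1,2) by simp
      ultimately show False using t by linarith
    qed
    ultimately have "t = 1" by simp
    hence "int (s + w) = int p" using t by simp
    hence "s + w = p" by (simp only: of_nat_eq_iff)
    thus ?thesis by (metis diff_add_inverse2)
  qed
qed


context
  fixes w :: nat
  assumes w1: "1 \<le> w" and w2: "2 * w < p"
begin

lemma Fsq_pw: "(Fsq (p - w) :: 'k poly) = Fsq w"
proof -
  have "(of_nat (p - w) :: 'k) = - of_nat w" using w2 by (simp add: of_nat_diff)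
  thus ?thesis by (simp add: Fsq_def)
qed

lemma w_ne: "w \<noteq> p - w" using w2 by simp

lemma Q1_split: "(\<Prod>s\<in>{..<p} - {w}. Fsq s) = (Fsq w :: 'k poly) * Q0 p w"
  unfolding Q0_def using w1 w2 w_ne
  by (subst prod.remove[of _ "p - w"]) (auto simp: Fsq_pw)

lemma Q1'_split: "(\<Prod>s\<in>{..<p} - {p - w}. Fsq s) = (Fsq w :: 'k poly) * Q0 p w"
proof -
  have e: "{..<p} - {w} - {p - w} = {..<p} - {p - w} - {w}" by auto
  show ?thesis unfolding Q0_def e using w2 w_ne
    by (subst prod.remove[of _ "w"]) auto
qed

lemma K_split: "(\<Prod>s<p. Fsq s) = (Fsq w :: 'k poly) * Fsq w * Q0 p w"
  using w2 by (subst prod.remove[of _ w]) (auto simp: Q1_split mult.assoc)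

lemma Q0_nz: "poly (Q0 p w :: 'k poly) (of_nat w ^ 2) \<noteq> 0"
proof -
  have "of_nat w ^ 2 - (of_nat s :: 'k) ^ 2 \<noteq> 0" if "s \<in> {..<p} - {w} - {p - w}" for s
  proof
    assume "of_nat w ^ 2 - (of_nat s :: 'k) ^ 2 = 0"
    hence "(of_nat s :: 'k) ^ 2 = of_nat w ^ 2" by simp
    hence "s = w \<or> s = p - w" using sq_cases[of s w] that w1 w2 by auto
    thus False using that by auto
  qed
  thus ?thesis by (simp add: Q0_def poly_prod Fsq_def)
qed

lemma Rk_dvd: "Rk (of_nat l :: 'k) w dvd Fsq w * Q0 p w"
proof -
  have R: "Rk (of_nat l :: 'k) w = (\<Prod>s\<in>gmap p l ` {..<w}. Fsq s)"
    using Rk_img[of w l] w2 by simp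
  show ?thesis
  proof (cases "w \<in> gmap p l ` {..<w}")
    case False
    hence "gmap p l ` {..<w} \<subseteq> {..<p} - {w}" using gmap_lt by auto
    hence "(\<Prod>s\<in>gmap p l ` {..<w}. Fsq s) dvd (\<Prod>s\<in>{..<p} - {w}. (Fsq s :: 'k poly))"
      by (rule prod_dvd_prod_subset[rotated]) simp
    thus ?thesis using R Q1_split by simp
  next
    case True
    then obtain a where a: "a < w" "gmap p l a = w" by auto
    have "p - w \<notin> gmap p l ` {..<w}"
    proof
      assume "p - w \<in> gmap p l ` {..<w}"
      then obtain b where "b < w" "gmap p l b = p - w" by auto
      thus False using gmap_conflict[OF w2 a(1) _ a(2)] by blast
    qed
    have "gmap p l ` {..<w} \<subseteq> {..<p} - {p - w}"
    proof
      fix x assume x: "x \<in> gmap p l ` {..<w}"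
      have "x \<noteq> p - w"
      proof
        assume "x = p - w"
        with x \<open>p - w \<notin> gmap p l ` {..<w}\<close> show False by simp
      qed
      moreover have "x < p" using x gmap_lt by auto
      ultimately show "x \<in> {..<p} - {p - w}" by simp
    qed
    hence "(\<Prod>s\<in>gmap p l ` {..<w}. Fsq s) dvd (\<Prod>s\<in>{..<p} - {p - w}. (Fsq s :: 'k poly))"
      by (rule prod_dvd_prod_subset[rotated]) simp
    thus ?thesis using R Q1'_split by simp
  qed
qed

end
end


lemma numeral_comm: "numeral n * (x::'a::ring_1) = x * numeral n"
  by (metis mult_of_nat_commute of_nat_numeral)
lemma two_comm: "2 * (x::'a::ring_1) = x * 2" by (rule numeral_comm)
lemma four_comm: "4 * (x::'a::ring_1) = x * 4" by (rule numeral_comm)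
lemma four_left: "(x::'a::ring_1) * (4 * y) = 4 * (x * y)"
proof -
  have "x * (4 * y) = (x * 4) * y" by (simp only: mult.assoc)
  also have "\<dots> = 4 * (x * y)" by (simp only: four_comm[of x, symmetric] mult.assoc)
  finally show ?thesis .
qed

fun Pk :: "nat \<Rightarrow> 'k::field poly poly" where
  "Pk 0 = 1"
| "Pk (Suc k) = ([:[:0, 1:]:] - ([:0, 1:] - 1) ^ 2) * pcompose (Pk k) [:[:-2:], 1:]"

lemma poly_Pk: "poly (Pk k) [:l:] = Rk l k"
proof (induction k arbitrary: l)
  case 0
  then show ?case by simp
next
  case (Suc k)
  have "poly [:[:-2:], 1:] [:l:] = [:l - 2:]" by simp
  moreover have "([:0, 1:] - ([:l:] - 1) ^ 2) = [:- ((l - 1) ^ 2), 1:]"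
    by (simp add: power2_eq_square one_pCons)
  ultimately show ?case by (simp add: poly_pcompose Suc)
qed

context
  fixes \<phi> :: "'k::field \<Rightarrow> 'a::ring_1" and e f h :: 'a and p :: nat
  assumes U: "U0_sl2_alg p \<phi> e f h" and charp: "CHAR('k) = p" and p2: "p > 2"
begin

lemma kam: "k_algebra_map \<phi>" using U by (simp add: U0_sl2_alg_def)
lemma phi_central: "\<phi> a * y = y * \<phi> a" using kam by (simp add: k_algebra_map_def)
lemma gen_all: "subalg_gen \<phi> {e, f, h} = UNIV" using U by (simp add: U0_sl2_alg_def)
lemma r_ef: "e * f - f * e = h" using U by (simp add: U0_sl2_alg_def)
lemma r_he: "h * e - e * h = 2 * e" using U by (simp add: U0_sl2_alg_def)
lemma r_hf: "h * f - f * h = - (2 * f)" using U by (simp add: U0_sl2_alg_def)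
lemma ep: "e ^ p = 0" using U by (simp add: U0_sl2_alg_def)
lemma fp: "f ^ p = 0" using U by (simp add: U0_sl2_alg_def)
lemma hp: "h ^ p = h" using U by (simp add: U0_sl2_alg_def)

lemma evh_phi: "evhom \<phi> x"
  unfolding evhom_def using kam phi_central unfolding k_algebra_map_def by blast

lemma ef: "e * f = f * e + h" using r_ef by (simp add: algebra_simps)
lemma he: "h * e = e * h + e * 2"
  using r_he two_comm[of e] by (simp add: algebra_simps)
lemma hf: "h * f = f * h - f * 2"
  using r_hf two_comm[of f] by (simp add: algebra_simps)

abbreviation "c \<equiv> casimir e f h"

lemma efh: "h * (e * f) = e * f * h"
proof -
  have "h * (e * f) = (e * h + e * 2) * f" by (simp add: he flip: mult.assoc)
  also have "\<dots> = e * (h * f) + e * (2 * f)" by (simp add: distrib_right mult.assoc)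
  also have "\<dots> = e * (f * h) - e * (f * 2) + e * (2 * f)" by (simp add: hf right_diff_distrib)
  also have "\<dots> = e * f * h" by (simp add: two_comm[of f] mult.assoc)
  finally show ?thesis .
qed

lemma c_h: "c * h = h * c"
proof -
  have "(h - 1) ^ 2 * h = h * (h - 1) ^ 2"
    by (simp add: power2_eq_square algebra_simps)
  moreover have "4 * e * f * h = h * (4 * e * f)"
  proof -
    have "4 * e * f * h = 4 * (h * (e * f))" by (simp only: mult.assoc efh)
    also have "\<dots> = h * (4 * e * f)" by (simp only: four_comm[of h] mult.assoc flip: mult.assoc)
    finally show ?thesis .
  qed
  ultimately show ?thesis
    by (simp only: casimir_def distrib_right distrib_left)
qed

lemma hm1e: "(h - 1) * e = e * (h + 1)"
  using he by (simp add: algebra_simps mult_2_right)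

lemma hm1f: "(h - 1) * f = f * (h - 3)"
proof -
  have "(h - 1) * f = f * h - (f * 2 + f)" using hf by (simp add: algebra_simps)
  also have "f * 2 + f = f * 3"
  proof -
    have "f * 3 = f * (2 + 1)" by simp
    thus ?thesis by (simp only: distrib_left mult_1_right)
  qed
  also have "f * h - f * 3 = f * (h - 3)" by (simp add: right_diff_distrib)
  finally show ?thesis .
qed

lemmas evh_simps = evhom.evx_power[OF evh_phi] evhom.evx_X[OF evh_phi] evhom.evx_add[OF evh_phi]
  evhom.evx_diff[OF evh_phi] evhom.evx_smult[OF evh_phi] evhom.evx_const[OF evh_phi]
  evhom.psi_1[OF evh_phi] evhom.psi_uminus[OF evh_phi] evhom.psi_numeral[OF evh_phi]
  evhom.psi_0[OF evh_phi] evhom.evx_mult[OF evh_phi] evhom.evx_lin[OF evh_phi]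

lemma id1: "(h + 1) ^ 2 = (h - 1) ^ 2 + 4 * h"
proof -
  have eq: "([:1, 1:] ^ 2 :: 'k poly) = [:-1, 1:] ^ 2 + smult 4 [:0, 1:]"
    by (simp add: power2_eq_square)
  have "evx \<phi> h ([:1, 1:] ^ 2) = evx \<phi> h ([:-1, 1:] ^ 2 + smult 4 [:0, 1:])"
    by (simp only: eq)
  thus ?thesis by (simp add: evh_simps add.commute)
qed

lemma id2: "(h - 3) ^ 2 = (h - 1) ^ 2 - 4 * h + 4 * 2"
proof -
  have eq: "([:-3, 1:] ^ 2 :: 'k poly) = [:-1, 1:] ^ 2 - smult 4 [:0, 1:] + [:8:]"
    by (simp add: power2_eq_square)
  have "evx \<phi> h ([:-3, 1:] ^ 2) = evx \<phi> h ([:-1, 1:] ^ 2 - smult 4 [:0, 1:] + [:8:])"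
    by (simp only: eq)
  thus ?thesis by (simp add: evh_simps add.commute)
qed

lemma c_e: "c * e = e * c"
proof -
  have a: "(h - 1) ^ 2 * e = e * (h + 1) ^ 2"
  proof -
    have "(h - 1) ^ 2 * e = (h - 1) * ((h - 1) * e)" by (simp add: power2_eq_square mult.assoc)
    also have "\<dots> = ((h - 1) * e) * (h + 1)" by (simp only: hm1e mult.assoc[symmetric])
    also have "\<dots> = e * (h + 1) ^ 2" by (simp add: hm1e mult.assoc power2_eq_square)
    finally show ?thesis .
  qed
  have "c * e = e * (h + 1) ^ 2 + 4 * (e * f * e)"
    by (simp add: casimir_def distrib_right a mult.assoc)
  also have "\<dots> = e * (h - 1) ^ 2 + 4 * (e * h) + 4 * (e * f * e)"
  proof -
    have e4h: "e * (4 * h) = 4 * (e * h)" by (simp only: mult.assoc[symmetric] four_comm[of e])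
    show ?thesis by (simp add: id1 distrib_left e4h)
  qed
  also have "\<dots> = e * (h - 1) ^ 2 + 4 * (e * (e * f))"
  proof -
    have "e * (e * f) = e * (f * e + h)" by (simp only: ef)
    also have "\<dots> = e * f * e + e * h" by (simp only: distrib_left mult.assoc)
    finally have "e * (e * f) = e * f * e + e * h" .
    thus ?thesis by (simp add: distrib_left add_ac)
  qed
  also have "\<dots> = e * c"
    by (simp only: casimir_def distrib_left mult.assoc four_left)
  finally show ?thesis .
qed

lemma c_f: "c * f = f * c"
proof -
  have a: "(h - 1) ^ 2 * f = f * (h - 3) ^ 2"
  proof -
    have "(h - 1) ^ 2 * f = (h - 1) * ((h - 1) * f)" by (simp add: power2_eq_square mult.assoc)
    also have "\<dots> = ((h - 1) * f) * (h - 3)" by (simp only: hm1f mult.assoc[symmetric])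
    also have "\<dots> = f * (h - 3) ^ 2" by (simp add: hm1f mult.assoc power2_eq_square)
    finally show ?thesis .
  qed
  have fef: "f * (e * f) = e * f * f - (f * h - f * 2)"
  proof -
    have fe: "f * e = e * f - h" using ef by simp
    have "f * (e * f) = (f * e) * f" by (simp only: mult.assoc)
    also have "\<dots> = e * f * f - h * f" by (simp only: fe left_diff_distrib)
    finally show ?thesis by (simp only: hf)
  qed
  have "c * f = f * (h - 3) ^ 2 + 4 * (e * f * f)"
    by (simp add: casimir_def distrib_right a mult.assoc)
  also have "\<dots> = f * (h - 1) ^ 2 - 4 * (f * h) + 4 * (f * 2) + 4 * (e * f * f)"
    by (simp only: id2 right_diff_distrib distrib_left four_left)
  also have "\<dots> = f * (h - 1) ^ 2 + 4 * (f * (e * f))"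
    by (simp only: fef right_diff_distrib distrib_left) (simp add: algebra_simps)
  also have "\<dots> = f * c"
    by (simp only: casimir_def distrib_left mult.assoc four_left)
  finally show ?thesis .
qed

lemma c_central: "c * y = y * c"
proof -
  have "y \<in> subalg_gen \<phi> {e, f, h}" using gen_all by simp
  thus ?thesis
  proof (induction y rule: subalg_gen.induct)
    case (scal x)
    then show ?case using phi_central[of x c] by simp
  next
    case (gen s)
    then show ?case using c_e c_f c_h by auto
  next
    case (add a b)
    then show ?case by (simp add: distrib_left distrib_right)
  next
    case (mult a b)
    have "c * (a * b) = (c * a) * b" by (simp only: mult.assoc)
    also have "\<dots> = a * (c * b)" using mult.IH(1) by (simp only: mult.assoc)
    also have "\<dots> = a * b * c" using mult.IH(2) by (simp only: mult.assoc)
    finally show ?case .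
  qed
qed

abbreviation "evc \<equiv> evx \<phi> c"
abbreviation "ev2 \<equiv> evx (evx \<phi> c) h"
abbreviation "evh \<equiv> evx \<phi> h"

lemma evc_comm: "y * c = c * y \<Longrightarrow> evc P * y = y * evc P"
  by (rule evhom.evx_commute[OF evh_phi]) (assumption, rule phi_central)

lemma evc_central: "evc P * y = y * evc P"
  by (rule evc_comm) (simp add: c_central)

lemma evc_hom: "evhom evc h"
  unfolding evhom_def
  using evhom.evx_add[OF evh_phi] evhom.evx_mult[OF evh_phi] evhom.evx_1[OF evh_phi] evc_central
  by blast

lemma ev2_comm: "y * h = h * y \<Longrightarrow> ev2 P * y = y * ev2 P"
  by (rule evhom.evx_commute[OF evc_hom]) (assumption, rule evc_central)

lemma evc_lin: "evc [:a, 1:] = \<phi> a + c"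
  by (simp add: evhom.evx_lin[OF evh_phi] evhom.psi_1[OF evh_phi])

lemma ev2_const: "ev2 [:q:] = evc q"
  by (simp add: evhom.evx_const[OF evc_hom])

lemma ev2_lin: "ev2 [:q, 1:] = evc q + h"
  using evhom.evx_lin[OF evc_hom, of q 1] by (simp add: evhom.psi_1[OF evc_hom])

lemma pow4_comm: "(4::'a) ^ k * y = y * 4 ^ k"
proof -
  have "(4::'a) ^ k = of_nat (4 ^ k)" by simp
  thus ?thesis by (simp only: mult_of_nat_commute)
qed

lemma ev2_f: "ev2 Q * f = f * ev2 (pcompose Q [:[:-2:], 1:])"
proof (rule evhom.evx_shift[OF evc_hom])
  have "evc [:-2:] = - 2"
    by (simp add: evhom.evx_const[OF evh_phi] evhom.psi_uminus[OF evh_phi] evhom.psi_numeral[OF evh_phi])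
  thus "h * f = f * (h + evc [:-2:])" using hf by (simp add: right_diff_distrib distrib_left)
qed (rule evc_central)

lemma ev2_Pk: "ev2 (Pk k) = 4 ^ k * (e ^ k * f ^ k)"
proof (induction k)
  case 0
  then show ?case by (simp add: evhom.evx_1[OF evc_hom])
next
  case (Suc k)
  have cv: "ev2 [:[:0, 1:]:] = c"
    using ev2_const evc_lin[of 0] by (simp add: evhom.psi_0[OF evh_phi])
  have hv: "ev2 ([:0, 1:] - 1) = h - 1"
    using ev2_lin[of 0] by (simp add: evhom.evx_diff[OF evc_hom] evhom.evx_1[OF evc_hom]
        evhom.evx_0[OF evh_phi])
  have "ev2 ([:[:0, 1:]:] - ([:0, 1:] - 1) ^ 2) = c - (h - 1) ^ 2"
    by (subst evhom.evx_diff[OF evc_hom]) (simp only: evhom.evx_power[OF evc_hom] cv hv)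
  also have "c - (h - 1) ^ 2 = 4 * e * f" by (simp add: casimir_def)
  finally have first: "ev2 ([:[:0, 1:]:] - ([:0, 1:] - 1) ^ 2) = 4 * e * f" .
  have "ev2 (Pk (Suc k)) = 4 * e * f * ev2 (pcompose (Pk k) [:[:-2:], 1:])"
    by (simp only: Pk.simps evhom.evx_mult[OF evc_hom] first)
  also have "\<dots> = 4 * (e * (ev2 (Pk k) * f))"
    by (simp only: ev2_f mult.assoc)
  also have "\<dots> = 4 * (e * (4 ^ k * (e ^ k * f ^ k)) * f)"
    by (simp only: Suc mult.assoc)
  also have "\<dots> = 4 ^ Suc k * (e ^ Suc k * f ^ Suc k)"
  proof -
    have "e * (4 ^ k * (e ^ k * f ^ k)) = (e * 4 ^ k) * (e ^ k * f ^ k)"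
      by (simp only: mult.assoc)
    also have "\<dots> = (4 ^ k * e) * (e ^ k * f ^ k)"
      by (simp only: pow4_comm)
    finally have "e * (4 ^ k * (e ^ k * f ^ k)) = 4 ^ k * (e * (e ^ k * f ^ k))"
      by (simp only: mult.assoc)
    moreover have "e ^ Suc k = e * e ^ k" by (rule power_Suc)
    moreover have "f ^ Suc k = f ^ k * f" by (rule power_Suc2)
    moreover have "(4::'a) ^ Suc k = 4 * 4 ^ k" by (rule power_Suc)
    ultimately show ?thesis by (simp only: mult.assoc)
  qed
  finally show ?case .
qed

definition "dlt l = evh (smult (inverse (poly (Dl p l) (of_nat l))) (Dl p l))"

lemma sum_dlt: "(\<Sum>l<p. dlt l) = 1"
proof -
  have "(\<Sum>l<p. dlt l) = evh (\<Sum>l<p. smult (inverse (poly (Dl p l) (of_nat l))) (Dl p l))"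
    by (simp add: dlt_def evhom.evx_sum[OF evh_phi])
  also have "\<dots> = 1" by (simp add: lagrange[OF charp p2] evhom.evx_1[OF evh_phi])
  finally show ?thesis .
qed

lemma evh_lin': "evh [:a, 1:] = \<phi> a + h"
  by (simp add: evhom.evx_lin[OF evh_phi] evhom.psi_1[OF evh_phi])

lemma dlt_kill: "l < p \<Longrightarrow> (h - \<phi> (of_nat l)) * dlt l = 0"
proof -
  assume l: "l < p"
  have hh: "h - \<phi> (of_nat l) = evh [:- of_nat l, 1:]"
    by (simp add: evh_lin' evhom.psi_uminus[OF evh_phi])
  have "(h - \<phi> (of_nat l)) * dlt l
      = evh ([:- of_nat l, 1:] * smult (inverse (poly (Dl p l) (of_nat l))) (Dl p l))"
    unfolding dlt_def hh by (rule evhom.evx_mult[OF evh_phi, symmetric])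
  also have "\<dots> = evh (smult (inverse (poly (Dl p l) (of_nat l))) (Zp p))"
    by (simp only: mult_smult_right Dl_Zp[OF charp p2 l])
  also have "\<dots> = 0"
  proof -
    have "evh (Zp p) = h ^ p - h"
      by (simp add: Zp_eq[OF charp p2] monom_altdef evhom.evx_diff[OF evh_phi]
          evhom.evx_smult[OF evh_phi] evhom.evx_power[OF evh_phi] evh_lin'[of 0, simplified]
          evhom.psi_1[OF evh_phi] evhom.psi_0[OF evh_phi])
    thus ?thesis by (simp add: evhom.evx_smult[OF evh_phi] hp)
  qed
  finally show ?thesis .
qed

lemma dlt_comm: "y * h = h * y \<Longrightarrow> dlt l * y = y * dlt l"
  unfolding dlt_def by (rule evhom.evx_commute[OF evh_phi]) (assumption, rule phi_central)

lemma ev2_dlt_comm: "ev2 G * dlt l = dlt l * ev2 G"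
proof (rule ev2_comm)
  show "dlt l * h = h * dlt l" unfolding dlt_def by (rule evhom.x_comm_evx[OF evh_phi, symmetric])
qed

lemma spec_dlt:
  assumes l: "l < p"
  shows "ev2 G * dlt l = evc (poly G [:of_nat l:]) * dlt l"
proof -
  define a where "a = [:(of_nat l :: 'k):]"
  have "poly (G - [:poly G a:]) a = 0" by simp
  then obtain Q where Q: "G - [:poly G a:] = [:-a, 1:] * Q"
    using poly_eq_0_iff_dvd by (metis dvdE)
  have ea: "ev2 [:-a, 1:] = h - \<phi> (of_nat l)"
    by (simp add: ev2_lin a_def evhom.evx_const[OF evh_phi] evhom.psi_uminus[OF evh_phi])
  have "ev2 G - evc (poly G a) = ev2 (G - [:poly G a:])"
    by (simp add: evhom.evx_diff[OF evc_hom] ev2_const)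
  also have "\<dots> = (h - \<phi> (of_nat l)) * ev2 Q"
    by (simp only: Q evhom.evx_mult[OF evc_hom] ea)
  finally have "ev2 G = evc (poly G a) + (h - \<phi> (of_nat l)) * ev2 Q"
    by (simp add: algebra_simps)
  hence "ev2 G * dlt l = evc (poly G a) * dlt l + ev2 Q * ((h - \<phi> (of_nat l)) * dlt l)"
    using evhom.evx_evx_commute[OF evc_hom, of "[:-a, 1:]" Q]
    by (simp add: ea distrib_right mult.assoc)
  thus ?thesis using dlt_kill[OF l] by (simp add: a_def)
qed

lemma principle:
  assumes X: "X * ev2 G = 0" and dv: "\<And>l. l < p \<Longrightarrow> poly G [:of_nat l:] dvd K"
  shows "X * evc K = 0"
proof -
  have "X * evc K = X * evc K * (\<Sum>l<p. dlt l)"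
    by (simp add: sum_dlt)
  also have "\<dots> = (\<Sum>l<p. X * evc K * dlt l)"
    by (rule sum_distrib_left)
  also have "\<dots> = 0"
  proof (rule sum.neutral, rule ballI)
    fix l assume "l \<in> {..<p}"
    hence l: "l < p" by simp
    obtain S where S: "K = poly G [:of_nat l:] * S" using dv[OF l] by (elim dvdE)
    have "X * evc K * dlt l = X * evc S * (evc (poly G [:of_nat l:]) * dlt l)"
      by (simp add: S mult.commute[of _ S] evhom.evx_mult[OF evh_phi] mult.assoc)
    also have "\<dots> = X * (evc S * ev2 G) * dlt l"
      by (simp add: spec_dlt[OF l] mult.assoc)
    also have "evc S * ev2 G = ev2 G * evc S"
      using evhom.evx_evx_commute[OF evc_hom, of "[:S:]" G] by (simp add: ev2_const)
    also have "X * (ev2 G * evc S) * dlt l = 0"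
      by (simp add: X flip: mult.assoc)
    finally show "X * evc K * dlt l = 0" .
  qed
  finally show ?thesis .
qed

lemma K_zero: "evc (\<Prod>s<p. Fsq s) = 0"
proof -
  have "1 * ev2 (Pk p) = 0" by (simp add: ev2_Pk ep)
  thus ?thesis
    using principle[of 1 "Pk p" "\<Prod>s<p. Fsq s"] by (simp add: poly_Pk Rk_full[OF charp p2])
qed

lemma Q1_zero:
  assumes w1: "1 \<le> w" and w2: "2 * w < p"
  shows "e ^ (p - w) * evc (Fsq w * Q0 p w) = 0"
proof (rule principle[of _ "Pk w"])
  have "e ^ (p - w) * ev2 (Pk w) = (e ^ (p - w) * 4 ^ w) * (e ^ w * f ^ w)"
    by (simp only: ev2_Pk mult.assoc)
  also have "\<dots> = 4 ^ w * (e ^ (p - w) * e ^ w * f ^ w)"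
    by (simp only: pow4_comm[symmetric] mult.assoc)
  also have "e ^ (p - w) * e ^ w = e ^ p" using w2 by (simp flip: power_add)
  finally show "e ^ (p - w) * ev2 (Pk w) = 0" by (simp add: ep)
next
  fix l assume "l < p"
  show "poly (Pk w) [:of_nat l:] dvd Fsq w * (Q0 p w :: 'k poly)"
    unfolding poly_Pk by (rule Rk_dvd[OF charp p2 w1 w2])
qed

lemma idem_pow: "q * q = q \<Longrightarrow> q ^ Suc n = (q::'a)"
  by (induction n) (simp_all add: power_Suc2)

lemma main_lemma:
  fixes \<alpha> :: int and w :: nat
  assumes w1: "1 \<le> w" and w2: "2 * w < p"
    and wa: "(of_nat w ^ 2 :: 'k) = of_int \<alpha>"
  shows "block_idem e f h \<alpha> * e ^ (p - w) * (c - of_int \<alpha>) = 0"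
proof -
  define L where "L = (Fsq w :: 'k poly)"
  define Q where "Q = (Q0 p w :: 'k poly)"
  have L: "L = [:- (of_nat w ^ 2), 1:]" by (simp add: L_def Fsq_def)
  obtain u v where B: "u * L ^ 2 + v * Q = 1"
    using bezout_lin2[OF Q0_nz[OF charp p2 w1 w2]] by (auto simp: L Q_def)
  have K0: "evc (L * L * Q) = 0"
    using K_zero K_split[OF charp p2 w1 w2] by (simp add: L_def Q_def)
  have eL: "evc L = c - of_int \<alpha>"
    by (simp add: L evc_lin evhom.psi_uminus[OF evh_phi] wa evhom.psi_of_int[OF evh_phi])
  define z0 where "z0 = evc (v * Q)"
  let ?m = "evx \<phi> c"
  have em: "\<And>P R. ?m (P * R) = ?m P * ?m R" by (rule evhom.evx_mult[OF evh_phi])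
  have edf: "\<And>P R. ?m (P - R) = ?m P - ?m R" by (rule evhom.evx_diff[OF evh_phi])
  have e1: "?m 1 = 1" by (rule evhom.evx_1[OF evh_phi])
  have epw: "\<And>P n. ?m (P ^ n) = ?m P ^ n" by (rule evhom.evx_power[OF evh_phi])
  have vQ: "v * Q = 1 - u * L ^ 2" using B by (simp add: algebra_simps)
  have z0_idem: "z0 * z0 = z0"
  proof -
    have a1: "v * Q * (v * Q) = v * Q * (1 - u * L ^ 2)" by (metis vQ)
    have "v * Q * (1 - u * L ^ 2) = v * Q - (u * v) * (L * L * Q)"
      by (simp add: algebra_simps power2_eq_square)
    hence "v * Q * (v * Q) = v * Q - (u * v) * (L * L * Q)" using a1 by simp
    hence "z0 * z0 = z0 - ?m (u * v) * ?m (L * L * Q)"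
      unfolding z0_def by (metis em edf)
    thus ?thesis using K0 by simp
  qed
  have z0_c: "\<And>x. z0 * x = x * z0" unfolding z0_def by (rule evc_central)
  have z0_N: "(c - of_int \<alpha>) ^ 2 * z0 = 0"
  proof -
    have "L ^ 2 * (v * Q) = v * (L * L * Q)" by (simp add: algebra_simps power2_eq_square)
    hence "(c - of_int \<alpha>) ^ 2 * z0 = ?m v * ?m (L * L * Q)"
      unfolding z0_def eL[symmetric] by (metis em epw)
    thus ?thesis using K0 by simp
  qed
  have z0_y: "(c - of_int \<alpha>) * ?m (u * L) = 1 - z0"
  proof -
    have "L * (u * L) = 1 - v * Q" using vQ by (simp add: algebra_simps power2_eq_square)
    thus ?thesis unfolding z0_def eL[symmetric] by (metis em edf e1)
  qed
  have bz: "block_idem e f h \<alpha> = z0"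
    unfolding block_idem_def
  proof (rule the_equality)
    show "z0 * z0 = z0 \<and> (\<forall>x. z0 * x = x * z0) \<and> (\<exists>N. (c - of_int \<alpha>) ^ N * z0 = 0)
        \<and> (\<exists>y. (c - of_int \<alpha>) * y = 1 - z0)"
      using z0_idem z0_c z0_N z0_y by blast
  next
    fix z assume "z * z = z \<and> (\<forall>x. z * x = x * z) \<and> (\<exists>N. (c - of_int \<alpha>) ^ N * z = 0)
        \<and> (\<exists>y. (c - of_int \<alpha>) * y = 1 - z)"
    then obtain N y where zi: "z * z = z" and zc: "\<And>x. z * x = x * z"
      and zN: "(c - of_int \<alpha>) ^ N * z = 0" and zy: "(c - of_int \<alpha>) * y = 1 - z" by blast
    have A: "z * (1 - z0) = 0"
    proof -
      have i1: "(1 - z0) * (1 - z0) = 1 - z0" using z0_idem by (simp add: algebra_simps)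
      have W: "1 - z0 = ?m (u * L ^ 2)" unfolding z0_def vQ by (simp add: edf e1)
      have ex: "2 * Suc N = N + (N + 2)" by simp
      have p1: "(L ^ 2) ^ Suc N = L ^ N * L ^ (N + 2)"
        unfolding power_mult[symmetric] ex by (rule power_add)
      have "(u * L ^ 2) ^ Suc N = u ^ Suc N * (L ^ 2) ^ Suc N" by (rule power_mult_distrib)
      hence "(u * L ^ 2) ^ Suc N = L ^ N * (u ^ Suc N * L ^ (N + 2))"
        unfolding p1 by (simp add: mult_ac)
      hence "1 - z0 = (c - of_int \<alpha>) ^ N * ?m (u ^ Suc N * L ^ (N + 2))"
        using idem_pow[OF i1, of N] W by (metis em epw eL)
      hence "z * (1 - z0) = ((c - of_int \<alpha>) ^ N * z) * ?m (u ^ Suc N * L ^ (N + 2))"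
        using zc by (metis mult.assoc)
      thus ?thesis using zN by simp
    qed
    have B': "z0 * (1 - z) = 0"
    proof -
      have i2: "(1 - z) * (1 - z) = 1 - z" using zi by (simp add: algebra_simps)
      have cy: "(c - of_int \<alpha>) * y = y * (c - of_int \<alpha>)" unfolding eL[symmetric] by (rule evc_central)
      have "z0 * (1 - z) = z0 * ((c - of_int \<alpha>) * y * ((c - of_int \<alpha>) * y))"
        using i2 zy by simp
      also have "\<dots> = ((c - of_int \<alpha>) ^ 2 * z0) * (y * y)"
        using cy z0_c by (simp add: mult.assoc power2_eq_square) (metis mult.assoc)
      finally show ?thesis using z0_N by simp
    qed
    have "z = z * z0" using A by (simp add: algebra_simps)
    also have "\<dots> = z0 * z" by (rule zc)
    also have "\<dots> = z0" using B' by (simp add: algebra_simps)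
    finally show "z = z0" .
  qed
  have "block_idem e f h \<alpha> * e ^ (p - w) * (c - of_int \<alpha>) = e ^ (p - w) * (z0 * evc L)"
    by (simp add: bz eL z0_c mult.assoc)
  also have "z0 * evc L = evc (L * Q) * ?m v"
    unfolding z0_def by (metis em mult.commute mult.assoc)
  also have "e ^ (p - w) * (evc (L * Q) * ?m v) = 0"
    using Q1_zero[OF w1 w2] by (simp add: L_def Q_def flip: mult.assoc)
  finally show ?thesis .
qed

end

theorem lemma4p9:
  fixes \<phi> :: "'k::alg_closed_field \<Rightarrow> 'a::ring_1"
    and e f h :: 'a and p :: nat and \<alpha> :: int and \<omega> :: nat
  assumes "CHAR('k) = p" and "p > 2"
    and "U0_sl2_alg p \<phi> e f h"
    and "\<not> int p dvd \<alpha>"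
    and "1 \<le> \<omega>" and "\<omega> \<le> (p - 1) div 2"
    and "int \<omega> ^ 2 mod int p = \<alpha> mod int p"
  shows "block_idem e f h \<alpha> * e ^ (p - \<omega>) * (casimir e f h - of_int \<alpha>) = 0"
proof -
  have w2: "2 * \<omega> < p" using assms(2,6) by linarith
  have "(of_int (int \<omega> ^ 2) :: 'k) = of_int \<alpha>"
    using of_int_eq_iff_cong_CHAR[where 'a='k, of "int \<omega> ^ 2" \<alpha>] assms(1,7) by (simp add: cong_def)
  hence wa: "(of_nat \<omega> ^ 2 :: 'k) = of_int \<alpha>" by simp
  show ?thesis by (rule main_lemma[OF assms(3,1,2,5) w2 wa])
qed

end
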